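(* Let $m\geq1$ and, for $s\geq2$, set $G(m,s)=sm-\operatorname{zcl}_s(\mathbb{R}\mathrm{P}^m)$. Then $G(m,2)\geq G(m,3)\geq G(m,4)\geq\cdots\geq0$.
   Context: With mod $2$ cohomology, the $s$-th zero-divisors of $\mathbb{R}\mathrm{P}^m$ are the elements of the kernel of $\Delta_s^*\colon H^*((\mathbb{R}\mathrm{P}^m)^{\times s};\mathbb{Z}_2)\to H^*(\mathbb{R}\mathrm{P}^m;\mathbb{Z}_2)$ induced by the diagonal; $\operatorname{zcl}_s(\mathbb{R}\mathrm{P}^m)$ is the maximal number of $s$-th zero-divisors with nonzero product. *)

theory Defs
  imports Main
begin

text \<open>Mod 2 cohomology of (RP^m)^s, modelled via Kuenneth as the truncated
polynomial algebra Z2[x_0,...,x_(s-1)]/(x_i^(m+1)).  A monomial is an exponent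
vector e :: nat => nat with e i <= m for i < s and e i = 0 for i >= s.
An element of the algebra (Z2 coefficients) is the finite set of monomials
occurring in it; addition is symmetric difference.\<close>

definition tmonos :: "nat \<Rightarrow> nat \<Rightarrow> (nat \<Rightarrow> nat) set" where
  "tmonos s m = {e. (\<forall>i<s. e i \<le> m) \<and> (\<forall>i\<ge>s. e i = 0)}"

definition tmul :: "nat \<Rightarrow> nat \<Rightarrow> (nat \<Rightarrow> nat) set \<Rightarrow> (nat \<Rightarrow> nat) set \<Rightarrow> (nat \<Rightarrow> nat) set" where
  "tmul s m P Q = {g \<in> tmonos s m.
      odd (card {(e, f). e \<in> P \<and> f \<in> Q \<and> (\<lambda>i. e i + f i) = g})}"

definition tone :: "(nat \<Rightarrow> nat) set" where
  "tone = {\<lambda>_. 0}"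

definition tprod :: "nat \<Rightarrow> nat \<Rightarrow> (nat \<Rightarrow> nat) set list \<Rightarrow> (nat \<Rightarrow> nat) set" where
  "tprod s m zs = foldr (tmul s m) zs tone"

text \<open>The diagonal map Delta_s^*: x_i maps to x in Z2[x]/(x^(m+1)); the image is
given as the set of degrees k <= m whose coefficient of x^k is 1.\<close>

definition diag :: "nat \<Rightarrow> nat \<Rightarrow> (nat \<Rightarrow> nat) set \<Rightarrow> nat set" where
  "diag s m P = {k. k \<le> m \<and> odd (card {e \<in> P. (\<Sum>i<s. e i) = k})}"

definition zero_div :: "nat \<Rightarrow> nat \<Rightarrow> (nat \<Rightarrow> nat) set \<Rightarrow> bool" where
  "zero_div s m P \<longleftrightarrow> P \<subseteq> tmonos s m \<and> diag s m P = {}"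

definition zcl :: "nat \<Rightarrow> nat \<Rightarrow> nat" where
  "zcl s m = (GREATEST k. \<exists>zs. length zs = k \<and> (\<forall>z\<in>set zs. zero_div s m z)
                               \<and> tprod s m zs \<noteq> {})"

definition G :: "nat \<Rightarrow> nat \<Rightarrow> int" where
  "G m s = int (s * m) - int (zcl s m)"

end

theory Submission
  imports Defs
begin

lemma tmul_mem:
  assumes "h \<in> tmul s m P Q"
  shows "h \<in> tmonos s m \<and> (\<exists>e\<in>P. \<exists>f\<in>Q. (\<lambda>i. e i + f i) = h)"
proof -
  have m: "h \<in> tmonos s m" and o: "odd (card {(e, f). e \<in> P \<and> f \<in> Q \<and> (\<lambda>i. e i + f i) = h})"
    using assms by (auto simp: tmul_def)
  from o have "{(e, f). e \<in> P \<and> f \<in> Q \<and> (\<lambda>i. e i + f i) = h} \<noteq> {}"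
    by (metis card.empty even_zero)
  then show ?thesis using m by auto
qed

lemma tmonos_mono: "tmonos s m \<subseteq> tmonos (Suc s) m"
proof
  fix x assume "x \<in> tmonos s m"
  then have a: "\<forall>i<s. x i \<le> m" "\<forall>i\<ge>s. x i = 0" by (auto simp: tmonos_def)
  have "\<forall>i<Suc s. x i \<le> m"
  proof (intro allI impI)
    fix i assume "i < Suc s"
    then show "x i \<le> m" using a by (cases "i < s") auto
  qed
  then show "x \<in> tmonos (Suc s) m" using a by (auto simp: tmonos_def)
qed

lemma tmul_lift:
  assumes "P \<subseteq> tmonos s m" "Q \<subseteq> tmonos s m"
  shows "tmul (Suc s) m P Q = tmul s m P Q"
proof
  show "tmul s m P Q \<subseteq> tmul (Suc s) m P Q"
    using tmonos_mono by (auto simp: tmul_def)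
next
  show "tmul (Suc s) m P Q \<subseteq> tmul s m P Q"
  proof
    fix g assume g: "g \<in> tmul (Suc s) m P Q"
    from tmul_mem[OF g] obtain e f where ef: "e \<in> P" "f \<in> Q" "(\<lambda>i. e i + f i) = g"
      and gm: "g \<in> tmonos (Suc s) m" by blast
    have "e \<in> tmonos s m" "f \<in> tmonos s m" using ef assms by auto
    then have "g \<in> tmonos s m" using gm ef(3) by (auto simp: tmonos_def)
    then show "g \<in> tmul s m P Q" using g by (auto simp: tmul_def)
  qed
qed

lemma tprod_lift:
  "\<forall>z\<in>set zs. z \<subseteq> tmonos s m \<Longrightarrow> tprod (Suc s) m zs = tprod s m zs \<and> tprod s m zs \<subseteq> tmonos s m"
proof (induction zs)
  case Nil
  then show ?case by (auto simp: tprod_def tone_def tmonos_def)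
next
  case (Cons z zs)
  then have IH: "tprod (Suc s) m zs = tprod s m zs" "tprod s m zs \<subseteq> tmonos s m" by auto
  have zt: "z \<subseteq> tmonos s m" using Cons by auto
  have "tprod (Suc s) m (z # zs) = tmul (Suc s) m z (tprod (Suc s) m zs)" by (simp add: tprod_def)
  also have "\<dots> = tmul s m z (tprod s m zs)" using IH tmul_lift[OF zt IH(2)] by simp
  also have "\<dots> = tprod s m (z # zs)" by (simp add: tprod_def)
  finally show ?case using tmul_mem by (auto simp: tprod_def)
qed

definition deg :: "nat \<Rightarrow> (nat \<Rightarrow> nat) \<Rightarrow> nat" where
  "deg s e = (\<Sum>i<s. e i)"

lemma zero_div_pos:
  assumes "zero_div s m z" "e \<in> z"
  shows "deg s e \<ge> 1"
proof (rule ccontr)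
  assume "\<not> deg s e \<ge> 1"
  then have d0: "deg s e = 0" by simp
  have et: "e \<in> tmonos s m" using assms unfolding zero_div_def by auto
  have ez: "e = (\<lambda>_. 0)"
  proof
    fix i show "e i = 0"
      using d0 et by (cases "i < s") (auto simp: deg_def tmonos_def)
  qed
  have "{x \<in> z. (\<Sum>i<s. x i) = 0} = {e}"
  proof
    show "{e} \<subseteq> {x \<in> z. (\<Sum>i<s. x i) = 0}" using assms(2) d0 by (auto simp: deg_def)
    show "{x \<in> z. (\<Sum>i<s. x i) = 0} \<subseteq> {e}"
    proof
      fix x assume x: "x \<in> {x \<in> z. (\<Sum>i<s. x i) = 0}"
      then have xt: "x \<in> tmonos s m" using assms unfolding zero_div_def by auto
      have "x = e" unfolding ez
      proof
        fix i show "x i = 0"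
          using x xt by (cases "i < s") (auto simp: tmonos_def)
      qed
      then show "x \<in> {e}" by simp
    qed
  qed
  then have "0 \<in> diag s m z" by (simp add: diag_def)
  then show False using assms unfolding zero_div_def by auto
qed

lemma deg_add: "deg s (\<lambda>i. e i + f i) = deg s e + deg s f"
  by (simp add: deg_def sum.distrib)

lemma tprod_deg:
  "\<forall>z\<in>set zs. zero_div s m z \<Longrightarrow> h \<in> tprod s m zs \<Longrightarrow> length zs \<le> deg s h"
proof (induction zs arbitrary: h)
  case Nil
  then show ?case by simp
next
  case (Cons z zs)
  have "h \<in> tmul s m z (tprod s m zs)" using Cons.prems by (simp add: tprod_def)
  from tmul_mem[OF this] obtain e f where ef: "e \<in> z" "f \<in> tprod s m zs" "(\<lambda>i. e i + f i) = h"
    by blast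
  have "length zs \<le> deg s f" using Cons ef by auto
  moreover have "1 \<le> deg s e" using zero_div_pos Cons.prems ef by auto
  ultimately show ?case using ef(3) deg_add[of s e f] by auto
qed

lemma tprod_sub: "tprod s m zs \<subseteq> tmonos s m \<or> zs = []"
  by (cases zs) (auto simp: tprod_def dest: tmul_mem)

lemma zcl_bound:
  assumes "\<forall>z\<in>set zs. zero_div s m z" "tprod s m zs \<noteq> {}"
  shows "length zs \<le> s * m"
proof (cases "zs = []")
  case True then show ?thesis by simp
next
  case False
  then have sub: "tprod s m zs \<subseteq> tmonos s m" using tprod_sub by blast
  obtain h where h: "h \<in> tprod s m zs" using assms by auto
  have "length zs \<le> deg s h" using tprod_deg assms h by blast
  also have "deg s h \<le> s * m"
  proof -
    have "\<forall>i<s. h i \<le> m" using h sub by (auto simp: tmonos_def)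
    then have "(\<Sum>i<s. h i) \<le> (\<Sum>i<s. m)" by (intro sum_mono) auto
    then show ?thesis by (simp add: deg_def)
  qed
  finally show ?thesis .
qed

definition ZP :: "nat \<Rightarrow> nat \<Rightarrow> nat \<Rightarrow> bool" where
  "ZP s m k \<longleftrightarrow> (\<exists>zs. length zs = k \<and> (\<forall>z\<in>set zs. zero_div s m z) \<and> tprod s m zs \<noteq> {})"

lemma ZP0: "ZP s m 0"
  by (auto simp: ZP_def tprod_def tone_def)

lemma ZP_bound: "ZP s m k \<Longrightarrow> k \<le> s * m"
  unfolding ZP_def using zcl_bound by blast

lemma zcl_eq: "zcl s m = Greatest (ZP s m)"
  unfolding zcl_def ZP_def by simp

lemma zcl_ZP: "ZP s m (zcl s m)"
  unfolding zcl_eq by (rule GreatestI_nat[where P="ZP s m", OF ZP0]) (use ZP_bound in blast)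

lemma zcl_le: "zcl s m \<le> s * m"
  using ZP_bound zcl_ZP by blast

lemma zcl_ge: "ZP s m k \<Longrightarrow> k \<le> zcl s m"
  unfolding zcl_eq by (rule Greatest_le_nat) (use ZP_bound in blast)+

definition dl :: "nat \<Rightarrow> nat \<Rightarrow> nat" where
  "dl j = (\<lambda>i. if i = j then 1 else 0)"

definition DD :: "nat \<Rightarrow> (nat \<Rightarrow> nat) set" where
  "DD s = {dl 0, dl s}"

lemma DD_zero_div:
  assumes "s \<ge> 1" "m \<ge> 1"
  shows "zero_div (Suc s) m (DD s)"
proof -
  have sub: "DD s \<subseteq> tmonos (Suc s) m" using assms by (auto simp: DD_def dl_def tmonos_def)
  have ne: "dl 0 \<noteq> dl s" using assms unfolding dl_def by (metis one_neq_zero not_one_le_zero)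
  have s0: "(\<Sum>i<Suc s. dl 0 i) = 1" by (simp add: dl_def)
  have s1: "(\<Sum>i<Suc s. dl s i) = 1" by (simp add: dl_def)
  have "diag (Suc s) m (DD s) = {}"
  proof -
    have "\<And>k. even (card {e \<in> DD s. (\<Sum>i<Suc s. e i) = k})"
    proof -
      fix k
      show "even (card {e \<in> DD s. (\<Sum>i<Suc s. e i) = k})"
      proof (cases "k = 1")
        case True
        then have ee: "{e \<in> DD s. (\<Sum>i<Suc s. e i) = k} = {dl 0, dl s}"
          using s0 s1 by (auto simp: DD_def)
        show ?thesis unfolding ee using ne by simp
      next
        case False
        then have ee: "{e \<in> DD s. (\<Sum>i<Suc s. e i) = k} = {}"
          using s0 s1 by (auto simp: DD_def)
        show ?thesis unfolding ee by simp
      qed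
    qed
    then show ?thesis by (auto simp: diag_def)
  qed
  then show ?thesis using sub by (simp add: zero_div_def)
qed

lemma rep_step:
  assumes s1: "s \<ge> 1" and Qt: "Q \<subseteq> tmonos (Suc s) m" and Qmax: "\<forall>h\<in>Q. h s \<le> n"
    and g: "g \<in> Q" "g s = n" and nm: "n < m"
  shows "tmul (Suc s) m (DD s) Q \<subseteq> tmonos (Suc s) m
       \<and> (\<forall>h\<in>tmul (Suc s) m (DD s) Q. h s \<le> Suc n)
       \<and> g(s := Suc n) \<in> tmul (Suc s) m (DD s) Q"
proof (intro conjI)
  show "tmul (Suc s) m (DD s) Q \<subseteq> tmonos (Suc s) m" using tmul_mem by blast
  show "\<forall>h\<in>tmul (Suc s) m (DD s) Q. h s \<le> Suc n"
  proof
    fix h assume "h \<in> tmul (Suc s) m (DD s) Q"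
    from tmul_mem[OF this] obtain e f where ef: "e \<in> DD s" "f \<in> Q" "(\<lambda>i. e i + f i) = h" by blast
    have "e s \<le> 1" using ef(1) by (auto simp: DD_def dl_def)
    moreover have "f s \<le> n" using Qmax ef by auto
    ultimately show "h s \<le> Suc n" using ef(3) by auto
  qed
  have eqs: "{(e, f). e \<in> DD s \<and> f \<in> Q \<and> (\<lambda>i. e i + f i) = g(s := Suc n)} = {(dl s, g)}"
  proof
    show "{(dl s, g)} \<subseteq> {(e, f). e \<in> DD s \<and> f \<in> Q \<and> (\<lambda>i. e i + f i) = g(s := Suc n)}"
      using g by (auto simp: DD_def dl_def)
    show "{(e, f). e \<in> DD s \<and> f \<in> Q \<and> (\<lambda>i. e i + f i) = g(s := Suc n)} \<subseteq> {(dl s, g)}"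
    proof clarify
      fix e f assume e: "e \<in> DD s" and f: "f \<in> Q" and eq: "(\<lambda>i. e i + f i) = g(s := Suc n)"
      have fs: "f s \<le> n" using Qmax f by auto
      have "e s + f s = Suc n" using fun_cong[OF eq, of s] by simp
      then have "e = dl s" using e fs s1 by (auto simp: DD_def dl_def)
      moreover have "f = g"
      proof
        fix i show "f i = g i" using fun_cong[OF eq, of i] g \<open>e = dl s\<close> by (cases "i = s") (auto simp: dl_def)
      qed
      ultimately show "e = dl s \<and> f = g" by simp
    qed
  qed
  have "g(s := Suc n) \<in> tmonos (Suc s) m" using g Qt nm by (auto simp: tmonos_def)
  then show "g(s := Suc n) \<in> tmul (Suc s) m (DD s) Q"
    unfolding tmul_def using eqs by simp
qed

lemma rep_all:
  assumes s1: "s \<ge> 1" and Qt: "Q \<subseteq> tmonos (Suc s) m" and Qmax: "\<forall>h\<in>Q. h s = 0"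
    and g: "g \<in> Q" and nm: "n \<le> m"
  shows "foldr (tmul (Suc s) m) (replicate n (DD s)) Q \<subseteq> tmonos (Suc s) m
       \<and> (\<forall>h\<in>foldr (tmul (Suc s) m) (replicate n (DD s)) Q. h s \<le> n)
       \<and> g(s := n) \<in> foldr (tmul (Suc s) m) (replicate n (DD s)) Q"
  using nm
proof (induction n)
  case 0
  have "g(s := 0) = g" using Qmax g by auto
  then show ?case using Qt Qmax g by auto
next
  case (Suc n)
  have nm': "n \<le> m" using Suc.prems by simp
  note IH0 = Suc.IH[OF nm']
  have IH1: "foldr (tmul (Suc s) m) (replicate n (DD s)) Q \<subseteq> tmonos (Suc s) m"
    using IH0 by (rule conjunct1)
  have IH2: "\<forall>h\<in>foldr (tmul (Suc s) m) (replicate n (DD s)) Q. h s \<le> n"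
    using IH0 by (metis conjunct1 conjunct2)
  have IH3: "g(s := n) \<in> foldr (tmul (Suc s) m) (replicate n (DD s)) Q"
    using IH0 by (metis conjunct2)
  note IH = IH1 IH2 IH3
  have nlt: "n < m" using Suc by simp
  have gn: "(g(s := n)) s = n" by simp
  from rep_step[OF s1 IH(1) IH(2) IH(3) gn nlt] show ?case unfolding replicate_Suc foldr_Cons comp_apply fun_upd_upd .
qed

lemma zcl_step:
  assumes "s \<ge> 2" "m \<ge> 1"
  shows "zcl s m + m \<le> zcl (Suc s) m"
proof -
  obtain zs where zs: "length zs = zcl s m" "\<forall>z\<in>set zs. zero_div s m z" "tprod s m zs \<noteq> {}"
    using zcl_ZP unfolding ZP_def by blast
  have zt: "\<forall>z\<in>set zs. z \<subseteq> tmonos s m" using zs(2) by (auto simp: zero_div_def)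
  note L = tprod_lift[OF zt]
  obtain g where g: "g \<in> tprod s m zs" using zs by auto
  define Q where "Q = tprod (Suc s) m zs"
  have Qt: "Q \<subseteq> tmonos (Suc s) m" using L tmonos_mono unfolding Q_def by blast
  have Q0: "\<forall>h\<in>Q. h s = 0" using L unfolding Q_def by (auto simp: tmonos_def)
  have gQ: "g \<in> Q" using L g unfolding Q_def by auto
  have s1: "s \<ge> 1" using assms by simp
  from rep_all[OF s1 Qt Q0 gQ order.refl] 
  have ne: "foldr (tmul (Suc s) m) (replicate m (DD s)) Q \<noteq> {}" by blast
  define ws where "ws = replicate m (DD s) @ zs"
  have "tprod (Suc s) m ws = foldr (tmul (Suc s) m) (replicate m (DD s)) Q"
    unfolding ws_def Q_def tprod_def by simp
  with ne have 1: "tprod (Suc s) m ws \<noteq> {}" by simp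
  have lift: "zero_div (Suc s) m z" if "z \<in> set zs" for z
  proof -
    have zd: "zero_div s m z" using zs that by auto
    then have zsub: "z \<subseteq> tmonos s m" by (simp add: zero_div_def)
    have "\<And>k. {e \<in> z. (\<Sum>i<Suc s. e i) = k} = {e \<in> z. (\<Sum>i<s. e i) = k}"
      using zsub by (auto simp: tmonos_def)
    then have "diag (Suc s) m z = diag s m z" by (simp add: diag_def)
    moreover have "z \<subseteq> tmonos (Suc s) m" using zsub tmonos_mono[of s m] by blast
    ultimately show ?thesis using zd by (simp add: zero_div_def)
  qed
  have 2: "\<forall>z\<in>set ws. zero_div (Suc s) m z"
    unfolding ws_def using lift DD_zero_div[OF s1 assms(2)] by auto
  have "ZP (Suc s) m (length ws)" unfolding ZP_def using 1 2 by blast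
  then have "length ws \<le> zcl (Suc s) m" by (rule zcl_ge)
  then show ?thesis using zs(1) unfolding ws_def by simp
qed

theorem lemma4p3:
  fixes m :: nat
  assumes "m \<ge> 1"
  shows "\<forall>s\<ge>2. G m (Suc s) \<le> G m s \<and> 0 \<le> G m s"
proof (intro allI impI conjI)
  fix s :: nat assume s: "s \<ge> 2"
  have "zcl s m + m \<le> zcl (Suc s) m" using zcl_step[OF s assms] .
  then show "G m (Suc s) \<le> G m s" unfolding G_def by simp
  have "int (zcl s m) \<le> int (s * m)" using zcl_le[of s m] by (simp only: of_nat_le_iff)
  then show "0 \<le> G m s" unfolding G_def by linarith
qed

end
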